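(* Let $p$ be a real polynomial with $\lim_{|x|\to\infty}p(x)=\infty$. (1) Suppose $p'$ is positive and increasing on an interval $(x_0,x_f)$, where $x_f$ may be $+\infty$, and, if $x_f<\infty$, that $p(x_f)\ge p(x_0)+1$. Then $\int_{x_0}^{x_f}e^{-p(x)}\,dx\approx e^{-p(x_0)}\,|\{x\in(x_0,x_f):p(x_0)<p(x)<p(x_0)+1\}|$. (2) Suppose $p'$ is negative and increasing on an interval $(x_f,x_0)$, where $x_f$ may be $-\infty$, and, if $x_f>-\infty$, that $p(x_f)\ge p(x_0)+1$. Then $\int_{x_f}^{x_0}e^{-p(x)}\,dx\approx e^{-p(x_0)}\,|\{x\in(x_f,x_0):p(x_0)<p(x)<p(x_0)+1\}|$. (3) Suppose $p'$ is either (i) positive and increasing on $I=(x_0,x_f)$ with $x_f<\infty$, or (ii) negative and increasing on $I=(x_f,x_0)$ with $x_f>-\infty$, and suppose $p(x_0)<p(x_f)<p(x_0)+1$. Then $\int_Ie^{-p(x)}\,dx\approx e^{-p(x_0)}|x_f-x_0|$.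
   Context: $X\approx Y$ means there is an absolute constant $c>0$ (independent of $p$ and of the interval) with $cY\le X\le c^{-1}Y$; $|E|$ denotes Lebesgue measure. *)

theory Defs
  imports "HOL-Analysis.Analysis" "HOL-Computational_Algebra.Polynomial"
begin

definition approx_with :: "real \<Rightarrow> real \<Rightarrow> real \<Rightarrow> bool" where
  "approx_with c X Y \<longleftrightarrow> c * Y \<le> X \<and> X \<le> Y / c"

end

theory Submission
  imports Defs
begin

lemma tail_exp_hk:
  fixes L K x1 :: real assumes L: "L > 0"
  shows "((\<lambda>x. K * exp(-(1/L)*(x - x1))) has_integral K*L) {x1..}"
proof -
  have "((\<lambda>x. exp (-(1/L)*x)) has_integral exp (-(1/L)*x1)/(1/L)) {x1..}"
    using has_integral_exp_minus_to_infinity[of "1/L" x1] L by simp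
  then have "((\<lambda>x. (K*exp(x1/L)) * exp (-(1/L)*x)) has_integral (K*exp(x1/L)) * (exp (-(1/L)*x1)/(1/L))) {x1..}"
    by (rule has_integral_mult_right)
  moreover have eqv: "(K*exp(x1/L)) * (exp (-(1/L)*x1)/(1/L)) = K*L"
    using L by (simp add: exp_minus field_simps)
  moreover have eqf: "\<And>x. (K*exp(x1/L)) * exp (-(1/L)*x) = K * exp(-(1/L)*(x - x1))"
    by (simp add: algebra_simps diff_divide_distrib exp_diff exp_minus divide_inverse)
  ultimately show ?thesis by (simp only: eqf eqv)
qed

lemma tail_exp:
  fixes L K x1 :: real assumes L: "L > 0" and K: "K \<ge> 0"
  shows "set_integrable lborel {x1..} (\<lambda>x. K * exp(-(1/L)*(x - x1)))"
    "(LINT x:{x1..}|lborel. K * exp(-(1/L)*(x - x1))) = K*L"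
proof -
  let ?h = "\<lambda>x. K * exp(-(1/L)*(x - x1))"
  have hk: "(?h has_integral K*L) {x1..}" by (rule tail_exp_hk[OF L])
  have "?h absolutely_integrable_on {x1..}"
    using hk K by (intro nonnegative_absolutely_integrable_1) (auto simp: integrable_on_def)
  then have "integrable lebesgue (\<lambda>x. indicator {x1..} x *\<^sub>R ?h x)"
    by (simp add: set_integrable_def)
  then show si: "set_integrable lborel {x1..} ?h"
    unfolding set_integrable_def
    by (subst (asm) integrable_completion) auto
  show "(LINT x:{x1..}|lborel. ?h x) = K*L"
    unfolding set_borel_integral_eq_integral(2)[OF si] by (rule integral_unique[OF hk])
qed

lemma reflect_int:
  fixes g :: "real \<Rightarrow> real"
  shows "set_lebesgue_integral lborel A g = set_lebesgue_integral lborel {x. -x \<in> A} (\<lambda>x. g (-x))"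
  unfolding set_lebesgue_integral_def
  using lborel_integral_real_affine[of "-1" "\<lambda>x. indicator A x *\<^sub>R g x" 0]
  by (simp add: indicator_def)

lemma bounds_Ioo:
  fixes g :: "real \<Rightarrow> real"
  assumes "x0 < x1" "\<And>x. x \<in> {x0<..<x1} \<Longrightarrow> lo \<le> g x \<and> g x \<le> hi" "continuous_on {x0..x1} g"
  shows "set_integrable lborel {x0<..<x1} g"
    "lo * (x1 - x0) \<le> (LINT x:{x0<..<x1}|lborel. g x)"
    "(LINT x:{x0<..<x1}|lborel. g x) \<le> hi * (x1 - x0)"
proof -
  show si: "set_integrable lborel {x0<..<x1} g"
    by (rule set_integrable_subset[OF borel_integrable_atLeastAtMost'[OF assms(3)]]) auto
  have c: "set_integrable lborel {x0<..<x1} (\<lambda>_. c)" for c :: real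
    by (rule set_integrable_subset[OF borel_integrable_atLeastAtMost'[of x0 x1 "\<lambda>_. c"]]) auto
  have ci: "(LINT x:{x0<..<x1}|lborel. c) = c * (x1 - x0)" for c :: real
    using assms(1) by (subst set_integral_const) (auto simp: emeasure_lborel_Ioo measure_lborel_Ioo)
  show "lo * (x1 - x0) \<le> (LINT x:{x0<..<x1}|lborel. g x)"
    using set_integral_mono[OF c si, of lo] assms(2) ci by auto
  show "(LINT x:{x0<..<x1}|lborel. g x) \<le> hi * (x1 - x0)"
    using set_integral_mono[OF si c, of hi] assms(2) ci by auto
qed

lemma cont_poly: "continuous_on A (poly (p::real poly))"
  using continuous_on_poly[OF continuous_on_id, of A p] by simp

lemma ereal_lt_trans: "x < v \<Longrightarrow> ereal v \<le> xf \<Longrightarrow> ereal x < xf"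
  by (cases xf) auto

lemma poly_mono_lem:
  fixes p :: "real poly"
  assumes "\<And>x. x \<in> {u<..<v} \<Longrightarrow> poly (pderiv p) x > 0" "u < v"
  shows "poly p u < poly p v"
  using assms by (intro DERIV_pos_imp_increasing_open[of u v "poly p"])
     (auto intro: poly_DERIV continuous_intros)

lemma core1:
  fixes p :: "real poly" and x0 :: real and xf :: ereal
  defines "S \<equiv> {x. ereal x0 < ereal x \<and> ereal x < xf}"
  assumes xf: "ereal x0 < xf"
    and pos: "\<forall>x\<in>S. poly (pderiv p) x > 0"
    and mon: "mono_on S (poly (pderiv p))"
    and fin: "\<forall>r. xf = ereal r \<longrightarrow> poly p r \<ge> poly p x0 + 1"
    and inf: "xf = \<infinity> \<longrightarrow> filterlim (poly p) at_top at_top"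
  shows "\<exists>x1. x0 < x1 \<and>
     {x. ereal x0 < ereal x \<and> ereal x < xf \<and> poly p x0 < poly p x \<and> poly p x < poly p x0 + 1} = {x0<..<x1} \<and>
     approx_with (exp (-1)) (LINT x:S|lborel. exp (- poly p x)) (exp (- poly p x0) * (x1 - x0))"
proof -
  define a where "a = poly p x0"
  have ml: "poly p u < poly p v" if "x0 \<le> u" "u < v" "ereal v \<le> xf" for u v
  proof (rule poly_mono_lem[OF _ that(2)])
    fix x assume "x \<in> {u<..<v}"
    then have "x \<in> S" using that unfolding S_def by (auto intro: ereal_lt_trans)
    then show "poly (pderiv p) x > 0" using pos by auto
  qed
  obtain b where b: "x0 < b" "ereal b \<le> xf" "poly p b \<ge> a + 1"
  proof (cases xf)
    case (real r)
    then show ?thesis using that[of r] xf fin a_def by auto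
  next
    case PInf
    then have "eventually (\<lambda>x. poly p x \<ge> a + 1) at_top"
      using inf filterlim_at_top by blast
    then obtain N where "\<And>x. x \<ge> N \<Longrightarrow> poly p x \<ge> a + 1"
      by (auto simp: eventually_at_top_linorder)
    then show ?thesis using that[of "max N (x0+1)"] PInf by auto
  next
    case MInf
    then show ?thesis using xf by auto
  qed
  obtain x1 where x1: "x0 \<le> x1" "x1 \<le> b" "poly p x1 = a + 1"
    using IVT'[of "poly p" x0 "a+1" b] b a_def cont_poly by auto
  have x1gt: "x0 < x1" using x1 a_def by (cases "x1 = x0") auto
  have x1f: "ereal x1 \<le> xf" using x1 b by (meson ereal_less_eq(3) order.trans)
  define L where "L = x1 - x0"
  have L: "L > 0" using x1gt L_def by auto
  have seteq: "{x. ereal x0 < ereal x \<and> ereal x < xf \<and> poly p x0 < poly p x \<and> poly p x < poly p x0 + 1} = {x0<..<x1}"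
  proof (intro set_eqI iffI)
    fix x assume "x \<in> {x. ereal x0 < ereal x \<and> ereal x < xf \<and> poly p x0 < poly p x \<and> poly p x < poly p x0 + 1}"
    then have h: "ereal x0 < ereal x" "ereal x < xf" "poly p x0 < poly p x" "poly p x < poly p x0 + 1" by auto
    have "x < x1"
    proof (rule ccontr)
      assume "\<not> x < x1"
      then have "poly p x1 \<le> poly p x"
        using ml[of x1 x] x1gt h(2) by (cases "x = x1") (auto simp: order_less_imp_le)
      then show False using h x1 a_def by auto
    qed
    then show "x \<in> {x0<..<x1}" using h by simp
  next
    fix x assume h: "x \<in> {x0<..<x1}"
    have "ereal x0 < ereal x" using h by auto
    moreover have "ereal x < xf" using h x1f by (auto intro: ereal_lt_trans)
    moreover have "poly p x0 < poly p x" using ml[of x0 x] h x1f ereal_lt_trans[of x x1 xf] by (auto simp: order_less_imp_le)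
    moreover have "poly p x < poly p x0 + 1" using ml[of x x1] h x1f x1 a_def by auto
    ultimately show "x \<in> {x. ereal x0 < ereal x \<and> ereal x < xf \<and> poly p x0 < poly p x \<and> poly p x < poly p x0 + 1}" by simp
  qed
  obtain \<xi>1 where xi1: "x0 < \<xi>1" "\<xi>1 < x1" "poly p x1 - poly p x0 = (x1 - x0) * poly (pderiv p) \<xi>1"
    using MVT2[OF x1gt, of "poly p" "poly (pderiv p)"] by (auto intro: poly_DERIV)
  have xi1v: "poly (pderiv p) \<xi>1 = 1/L" using xi1 x1 a_def L L_def by (auto simp: field_simps)
  have xi1S: "\<xi>1 \<in> S" using xi1 x1f unfolding S_def by (auto intro: ereal_lt_trans)
  have tailb: "poly p x \<ge> a + 1 + (x - x1)/L" if "x \<in> S" "x1 \<le> x" for x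
  proof (cases "x = x1")
    case True then show ?thesis using x1 by simp
  next
    case False
    then have lt: "x1 < x" using that by auto
    obtain \<xi>2 where xi2: "x1 < \<xi>2" "\<xi>2 < x" "poly p x - poly p x1 = (x - x1) * poly (pderiv p) \<xi>2"
      using MVT2[OF lt, of "poly p" "poly (pderiv p)"] by (auto intro: poly_DERIV)
    have "ereal \<xi>2 < xf" using xi2 that unfolding S_def by (cases xf) auto
    then have "\<xi>2 \<in> S" using xi2 that x1gt unfolding S_def by auto
    then have "poly (pderiv p) \<xi>2 \<ge> 1/L"
      using mon xi1S xi1 xi2 xi1v unfolding mono_on_def
      by (metis less_imp_le order.strict_trans)
    then have "(x - x1) * poly (pderiv p) \<xi>2 \<ge> (x - x1) * (1/L)"
      using lt by (intro mult_left_mono) auto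
    then show ?thesis using xi2 x1 by (auto simp: field_simps)
  qed
  define g where "g = (\<lambda>x. exp (- poly p x))"
  define h where "h = (\<lambda>x. exp (-(a+1)) * exp(-(1/L)*(x - x1)))"
  define A where "A = {x0<..<x1}"
  define B where "B = {x. x1 \<le> x \<and> ereal x < xf}"
  have SAB: "S = A \<union> B" unfolding S_def A_def B_def
  proof (intro set_eqI iffI)
    fix x assume "x \<in> {x. ereal x0 < ereal x \<and> ereal x < xf}"
    then show "x \<in> {x0<..<x1} \<union> {x. x1 \<le> x \<and> ereal x < xf}" by auto
  next
    fix x assume "x \<in> {x0<..<x1} \<union> {x. x1 \<le> x \<and> ereal x < xf}"
    then show "x \<in> {x. ereal x0 < ereal x \<and> ereal x < xf}"
      using x1f x1gt ereal_lt_trans[of x x1 xf] by auto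
  qed
  have disj: "A \<inter> B = {}" unfolding A_def B_def by auto
  have Bm: "B \<in> sets lborel" unfolding B_def by measurable
  have Bsub: "B \<subseteq> {x1..}" unfolding B_def by auto
  have gcont: "continuous_on X g" for X unfolding g_def by (intro continuous_intros)
  have gm: "set_borel_measurable lborel X g" if "X \<in> sets lborel" for X
    unfolding set_borel_measurable_def using that
    using borel_measurable_continuous_on_indicator[of X g] gcont[of X] by simp
  have gA: "a < poly p x \<and> poly p x < a + 1" if "x \<in> A" for x
    using that seteq a_def unfolding A_def by blast
  have Ab: "exp (-(a+1)) \<le> g x \<and> g x \<le> exp (-a)" if "x \<in> {x0<..<x1}" for x
    using gA[of x] that unfolding A_def g_def by auto
  note BA = bounds_Ioo[OF x1gt Ab gcont]
  have hint: "set_integrable lborel {x1..} h" "(LINT x:{x1..}|lborel. h x) = exp (-(a+1)) * L"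
    unfolding h_def using tail_exp[OF L, of "exp (-(a+1))" x1] by auto
  have hB: "set_integrable lborel B h" by (rule set_integrable_subset[OF hint(1) Bm Bsub])
  have gh: "g x \<le> h x" if "x \<in> B" for x
  proof -
    have "x \<in> S" "x1 \<le> x" using that SAB unfolding B_def by auto
    then have "poly p x \<ge> a + 1 + (x - x1)/L" by (rule tailb)
    then have "exp (- poly p x) \<le> exp (-(a+1) + (-(1/L)*(x - x1)))" by simp
    then show ?thesis unfolding g_def h_def by (simp only: exp_add)
  qed
  have gB: "set_integrable lborel B g"
  proof (rule set_integrable_bound[OF hB gm[OF Bm]], rule AE_I2, intro impI)
    fix x assume "x \<in> B"
    moreover have "g x > 0" "h x > 0" unfolding g_def h_def by auto
    ultimately show "norm (g x) \<le> norm (h x)" using gh by (metis abs_of_pos real_norm_def)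
  qed
  have gA_int: "set_integrable lborel A g" using BA(1) unfolding A_def .
  have split: "(LINT x:S|lborel. g x) = (LINT x:A|lborel. g x) + (LINT x:B|lborel. g x)"
    unfolding SAB by (rule set_integral_Un[OF disj gA_int gB])
  have Bnn: "0 \<le> (LINT x:B|lborel. g x)"
    unfolding set_lebesgue_integral_def g_def by (intro Bochner_Integration.integral_nonneg) (auto simp: indicator_def)
  have Bgh: "(LINT x:B|lborel. g x) \<le> (LINT x:B|lborel. h x)"
    by (rule set_integral_mono[OF gB hB gh])
  have "(LINT x:{x1..}|lborel. h x) = (LINT x:B|lborel. h x) + (LINT x:({x1..} - B)|lborel. h x)"
  proof -
    have "{x1..} = B \<union> ({x1..} - B)" using Bsub by auto
    then show ?thesis
      by (metis Diff_disjoint set_integral_Un hB hint(1) set_integrable_subset Diff_subset sets.Diff Bm atLeast_borel sets_lborel)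
  qed
  moreover have "0 \<le> (LINT x:({x1..} - B)|lborel. h x)"
    unfolding set_lebesgue_integral_def h_def by (intro Bochner_Integration.integral_nonneg) (auto simp: indicator_def)
  ultimately have hBle: "(LINT x:B|lborel. h x) \<le> exp (-(a+1)) * L" using hint(2) by linarith
  have e1: "exp (-(a+1)) = exp (-1) * exp (-a)" by (metis exp_add add.commute minus_add_distrib)
  have e2: "1 + exp (-1::real) \<le> exp 1"
  proof -
    have "exp (-1::real) \<le> 1" by simp
    moreover have "2 \<le> exp (1::real)" using exp_ge_add_one_self[of 1] by simp
    ultimately show ?thesis by linarith
  qed
  have lo: "exp (-1) * (exp (-a) * L) \<le> (LINT x:S|lborel. g x)"
    using BA(2) Bnn split e1 L_def A_def by (simp add: mult.assoc)
  have "(LINT x:S|lborel. g x) \<le> exp (-a) * L + exp (-1) * exp (-a) * L"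
    using BA(3) Bgh hBle split e1 L_def A_def by (simp add: mult.assoc)
  also have "\<dots> = (1 + exp (-1)) * (exp (-a) * L)" by (simp add: algebra_simps)
  also have "\<dots> \<le> exp 1 * (exp (-a) * L)"
    using e2 L by (intro mult_right_mono) auto
  finally have hi: "(LINT x:S|lborel. g x) \<le> exp (-a) * L / exp (-1)" by (simp add: exp_minus divide_inverse mult.commute)
  show ?thesis
    using lo hi seteq x1gt unfolding approx_with_def g_def a_def L_def by auto
qed

lemma core3:
  fixes p :: "real poly"
  assumes xf: "x0 < xf" and pos: "\<forall>x\<in>{x0<..<xf}. poly (pderiv p) x > 0"
    and v: "poly p x0 < poly p xf" "poly p xf < poly p x0 + 1"
  shows "approx_with (exp (-1)) (LINT x:{x0<..<xf}|lborel. exp (- poly p x)) (exp (- poly p x0) * (xf - x0))"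
proof -
  define a where "a = poly p x0"
  have gcont: "continuous_on X (\<lambda>x. exp (- poly p x))" for X by (intro continuous_intros)
  have b: "exp (-(a+1)) \<le> exp (- poly p x) \<and> exp (- poly p x) \<le> exp (-a)" if "x \<in> {x0<..<xf}" for x
  proof -
    have "poly p x0 < poly p x" using that pos by (intro poly_mono_lem[of x0 x]) auto
    moreover have "poly p x < poly p xf" using that pos by (intro poly_mono_lem[of x xf]) auto
    ultimately show ?thesis using v a_def by auto
  qed
  note BA = bounds_Ioo[OF xf b gcont]
  have e1: "exp (-(a+1)) = exp (-1) * exp (-a)" by (metis exp_add add.commute minus_add_distrib)
  have "2 \<le> exp (1::real)" using exp_ge_add_one_self[of 1] by simp
  then have "exp (-a) * (xf - x0) \<le> exp 1 * (exp (-a) * (xf - x0))"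
    using xf mult_right_mono[of 1 "exp 1" "exp (-a) * (xf - x0)"] by auto
  then have hi: "exp (-a) * (xf - x0) \<le> exp (-a) * (xf - x0) / exp (-1)"
    by (simp add: exp_minus divide_inverse mult.commute)
  show ?thesis using BA(2,3) hi e1 unfolding approx_with_def a_def[symmetric]
    by (auto simp: mult.assoc)
qed

lemma q_facts:
  fixes p :: "real poly"
  shows "poly (p \<circ>\<^sub>p [:0,-1:]) x = poly p (-x)"
    "poly (pderiv (p \<circ>\<^sub>p [:0,-1:])) x = - poly (pderiv p) (-x)"
  by (simp_all add: poly_pcompose pderiv_pcompose pderiv_pCons)

theorem lemma4p4:
  shows
  "(\<exists>c>0. \<forall>(p::real poly) (x0::real) (xf::ereal).
      filterlim (poly p) at_top at_infinity \<and> ereal x0 < xf \<and>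
      (\<forall>x\<in>{x. ereal x0 < ereal x \<and> ereal x < xf}. poly (pderiv p) x > 0) \<and>
      mono_on {x. ereal x0 < ereal x \<and> ereal x < xf} (poly (pderiv p)) \<and>
      (\<forall>r. xf = ereal r \<longrightarrow> poly p r \<ge> poly p x0 + 1)
      \<longrightarrow> approx_with c
            (LINT x:{x. ereal x0 < ereal x \<and> ereal x < xf}|lborel. exp (- poly p x))
            (exp (- poly p x0) * measure lborel
               {x. ereal x0 < ereal x \<and> ereal x < xf \<and> poly p x0 < poly p x \<and> poly p x < poly p x0 + 1}))
   \<and>
   (\<exists>c>0. \<forall>(p::real poly) (x0::real) (xf::ereal).
      filterlim (poly p) at_top at_infinity \<and> xf < ereal x0 \<and>
      (\<forall>x\<in>{x. xf < ereal x \<and> ereal x < ereal x0}. poly (pderiv p) x < 0) \<and>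
      mono_on {x. xf < ereal x \<and> ereal x < ereal x0} (poly (pderiv p)) \<and>
      (\<forall>r. xf = ereal r \<longrightarrow> poly p r \<ge> poly p x0 + 1)
      \<longrightarrow> approx_with c
            (LINT x:{x. xf < ereal x \<and> ereal x < ereal x0}|lborel. exp (- poly p x))
            (exp (- poly p x0) * measure lborel
               {x. xf < ereal x \<and> ereal x < ereal x0 \<and> poly p x0 < poly p x \<and> poly p x < poly p x0 + 1}))
   \<and>
   (\<exists>c>0. \<forall>(p::real poly) (x0::real) (xf::real).
      filterlim (poly p) at_top at_infinity \<and>
      poly p x0 < poly p xf \<and> poly p xf < poly p x0 + 1
      \<longrightarrow> (x0 < xf \<and> (\<forall>x\<in>{x0<..<xf}. poly (pderiv p) x > 0) \<and>
             mono_on {x0<..<xf} (poly (pderiv p))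
             \<longrightarrow> approx_with c (LINT x:{x0<..<xf}|lborel. exp (- poly p x))
                   (exp (- poly p x0) * \<bar>xf - x0\<bar>)) \<and>
          (xf < x0 \<and> (\<forall>x\<in>{xf<..<x0}. poly (pderiv p) x < 0) \<and>
             mono_on {xf<..<x0} (poly (pderiv p))
             \<longrightarrow> approx_with c (LINT x:{xf<..<x0}|lborel. exp (- poly p x))
                   (exp (- poly p x0) * \<bar>xf - x0\<bar>)))"
proof (intro conjI)
  have at: "filterlim (poly p) at_top at_top" if "filterlim (poly p) at_top at_infinity" for p :: "real poly"
    using filterlim_mono[OF that order_refl at_top_le_at_infinity] .
  have atm: "filterlim (poly (p \<circ>\<^sub>p [:0,-1:])) at_top at_top" if "filterlim (poly p) at_top at_infinity" for p :: "real poly"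
  proof -
    have "filterlim (\<lambda>x::real. -x) at_infinity at_top"
      using filterlim_mono[OF filterlim_uminus_at_bot_at_top at_bot_le_at_infinity order_refl] .
    then have "filterlim (\<lambda>x. poly p (-x)) at_top at_top"
      by (rule filterlim_compose[OF that])
    moreover have "poly (p \<circ>\<^sub>p [:0,-1:]) = (\<lambda>x. poly p (-x))" by (rule ext) (simp add: q_facts)
    ultimately show ?thesis by simp
  qed
  show "\<exists>c>0. \<forall>(p::real poly) (x0::real) (xf::ereal).
      filterlim (poly p) at_top at_infinity \<and> ereal x0 < xf \<and>
      (\<forall>x\<in>{x. ereal x0 < ereal x \<and> ereal x < xf}. poly (pderiv p) x > 0) \<and>
      mono_on {x. ereal x0 < ereal x \<and> ereal x < xf} (poly (pderiv p)) \<and>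
      (\<forall>r. xf = ereal r \<longrightarrow> poly p r \<ge> poly p x0 + 1)
      \<longrightarrow> approx_with c
            (LINT x:{x. ereal x0 < ereal x \<and> ereal x < xf}|lborel. exp (- poly p x))
            (exp (- poly p x0) * measure lborel
               {x. ereal x0 < ereal x \<and> ereal x < xf \<and> poly p x0 < poly p x \<and> poly p x < poly p x0 + 1})"
  proof (intro exI[of _ "exp (-1)"] conjI allI impI, simp)
    fix p :: "real poly" and x0 :: real and xf :: ereal
    assume H: "filterlim (poly p) at_top at_infinity \<and> ereal x0 < xf \<and>
      (\<forall>x\<in>{x. ereal x0 < ereal x \<and> ereal x < xf}. poly (pderiv p) x > 0) \<and>
      mono_on {x. ereal x0 < ereal x \<and> ereal x < xf} (poly (pderiv p)) \<and>
      (\<forall>r. xf = ereal r \<longrightarrow> poly p r \<ge> poly p x0 + 1)"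
    then obtain x1 where x1: "x0 < x1"
      "{x. ereal x0 < ereal x \<and> ereal x < xf \<and> poly p x0 < poly p x \<and> poly p x < poly p x0 + 1} = {x0<..<x1}"
      "approx_with (exp (-1)) (LINT x:{x. ereal x0 < ereal x \<and> ereal x < xf}|lborel. exp (- poly p x)) (exp (- poly p x0) * (x1 - x0))"
      using core1[of x0 xf p] at[of p] by blast
    then show "approx_with (exp (-1))
            (LINT x:{x. ereal x0 < ereal x \<and> ereal x < xf}|lborel. exp (- poly p x))
            (exp (- poly p x0) * measure lborel
               {x. ereal x0 < ereal x \<and> ereal x < xf \<and> poly p x0 < poly p x \<and> poly p x < poly p x0 + 1})"
      by (simp add: measure_lborel_Ioo)
  qed
  show "\<exists>c>0. \<forall>(p::real poly) (x0::real) (xf::ereal).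
      filterlim (poly p) at_top at_infinity \<and> xf < ereal x0 \<and>
      (\<forall>x\<in>{x. xf < ereal x \<and> ereal x < ereal x0}. poly (pderiv p) x < 0) \<and>
      mono_on {x. xf < ereal x \<and> ereal x < ereal x0} (poly (pderiv p)) \<and>
      (\<forall>r. xf = ereal r \<longrightarrow> poly p r \<ge> poly p x0 + 1)
      \<longrightarrow> approx_with c
            (LINT x:{x. xf < ereal x \<and> ereal x < ereal x0}|lborel. exp (- poly p x))
            (exp (- poly p x0) * measure lborel
               {x. xf < ereal x \<and> ereal x < ereal x0 \<and> poly p x0 < poly p x \<and> poly p x < poly p x0 + 1})"
  proof (intro exI[of _ "exp (-1)"] conjI allI impI, simp)
    fix p :: "real poly" and x0 :: real and xf :: ereal
    assume H: "filterlim (poly p) at_top at_infinity \<and> xf < ereal x0 \<and>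
      (\<forall>x\<in>{x. xf < ereal x \<and> ereal x < ereal x0}. poly (pderiv p) x < 0) \<and>
      mono_on {x. xf < ereal x \<and> ereal x < ereal x0} (poly (pderiv p)) \<and>
      (\<forall>r. xf = ereal r \<longrightarrow> poly p r \<ge> poly p x0 + 1)"
    define q where "q = p \<circ>\<^sub>p [:0,-1:]"
    have qv: "\<And>x. poly q x = poly p (-x)" "\<And>x. poly (pderiv q) x = - poly (pderiv p) (-x)"
      unfolding q_def by (rule q_facts)+
    have mem: "(ereal (-x0) < ereal x \<and> ereal x < -xf) \<longleftrightarrow> (xf < ereal (-x) \<and> ereal (-x) < ereal x0)" for x
      by (cases xf) auto
    have A1: "ereal (-x0) < -xf" using H by (cases xf) auto
    have A2: "\<forall>x\<in>{x. ereal (-x0) < ereal x \<and> ereal x < -xf}. poly (pderiv q) x > 0"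
    proof
      fix x assume "x \<in> {x. ereal (-x0) < ereal x \<and> ereal x < -xf}"
      then have "-x \<in> {x. xf < ereal x \<and> ereal x < ereal x0}" using mem[of x] by blast
      then have "poly (pderiv p) (-x) < 0" using H by blast
      then show "poly (pderiv q) x > 0" by (simp add: qv)
    qed
    have A3: "mono_on {x. ereal (-x0) < ereal x \<and> ereal x < -xf} (poly (pderiv q))"
    proof (rule mono_onI)
      fix r s assume rs: "r \<in> {x. ereal (-x0) < ereal x \<and> ereal x < -xf}" "s \<in> {x. ereal (-x0) < ereal x \<and> ereal x < -xf}" "r \<le> s"
      then have "-s \<in> {x. xf < ereal x \<and> ereal x < ereal x0}" "-r \<in> {x. xf < ereal x \<and> ereal x < ereal x0}" "-s \<le> -r"
        using mem[of s] mem[of r] by auto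
      then have "poly (pderiv p) (-s) \<le> poly (pderiv p) (-r)" using H by (auto simp: mono_on_def)
      then show "poly (pderiv q) r \<le> poly (pderiv q) s" using qv by simp
    qed
    have A4: "\<forall>r. -xf = ereal r \<longrightarrow> poly q r \<ge> poly q (-x0) + 1"
    proof (intro allI impI)
      fix r assume "-xf = ereal r"
      then have "xf = ereal (-r)" by (cases xf) auto
      then show "poly q r \<ge> poly q (-x0) + 1" using H qv by auto
    qed
    have A5: "-xf = \<infinity> \<longrightarrow> filterlim (poly q) at_top at_top"
      using atm[of p] H unfolding q_def by auto
    obtain x1 where x1: "-x0 < x1"
      "{x. ereal (-x0) < ereal x \<and> ereal x < -xf \<and> poly q (-x0) < poly q x \<and> poly q x < poly q (-x0) + 1} = {-x0<..<x1}"
      "approx_with (exp (-1)) (LINT x:{x. ereal (-x0) < ereal x \<and> ereal x < -xf}|lborel. exp (- poly q x)) (exp (- poly q (-x0)) * (x1 - -x0))"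
      using core1[of "-x0" "-xf" q, OF A1 A2 A3 A4 A5] by blast
    have int: "(LINT x:{x. xf < ereal x \<and> ereal x < ereal x0}|lborel. exp (- poly p x)) =
       (LINT x:{x. ereal (-x0) < ereal x \<and> ereal x < -xf}|lborel. exp (- poly q x))"
    proof -
      have "{x. -x \<in> {x. xf < ereal x \<and> ereal x < ereal x0}} = {x. ereal (-x0) < ereal x \<and> ereal x < -xf}"
        by (intro Collect_cong) (use mem in blast)
      then show ?thesis by (subst reflect_int) (simp add: qv)
    qed
    have "{x. xf < ereal x \<and> ereal x < ereal x0 \<and> poly p x0 < poly p x \<and> poly p x < poly p x0 + 1}
       = {x. -x \<in> {x. ereal (-x0) < ereal x \<and> ereal x < -xf \<and> poly q (-x0) < poly q x \<and> poly q x < poly q (-x0) + 1}}"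
    proof (intro Collect_cong)
      fix x
      have m: "(ereal (-x0) < ereal (-x) \<and> ereal (-x) < -xf) \<longleftrightarrow> (xf < ereal x \<and> ereal x < ereal x0)"
        using mem[of "-x"] by (simp only: minus_minus)
      show "(xf < ereal x \<and> ereal x < ereal x0 \<and> poly p x0 < poly p x \<and> poly p x < poly p x0 + 1) =
         (-x \<in> {x. ereal (-x0) < ereal x \<and> ereal x < -xf \<and> poly q (-x0) < poly q x \<and> poly q x < poly q (-x0) + 1})"
        unfolding mem_Collect_eq qv minus_minus using m by blast
    qed
    also have "\<dots> = {-x1<..<x0}" unfolding x1(2) by auto
    finally have ms: "measure lborel {x. xf < ereal x \<and> ereal x < ereal x0 \<and> poly p x0 < poly p x \<and> poly p x < poly p x0 + 1} = x1 - -x0"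
      using x1(1) by (simp add: measure_lborel_Ioo)
    show "approx_with (exp (-1))
            (LINT x:{x. xf < ereal x \<and> ereal x < ereal x0}|lborel. exp (- poly p x))
            (exp (- poly p x0) * measure lborel
               {x. xf < ereal x \<and> ereal x < ereal x0 \<and> poly p x0 < poly p x \<and> poly p x < poly p x0 + 1})"
      using x1(3) unfolding int ms by (simp add: qv)
  qed
  show "\<exists>c>0. \<forall>(p::real poly) (x0::real) (xf::real).
      filterlim (poly p) at_top at_infinity \<and>
      poly p x0 < poly p xf \<and> poly p xf < poly p x0 + 1
      \<longrightarrow> (x0 < xf \<and> (\<forall>x\<in>{x0<..<xf}. poly (pderiv p) x > 0) \<and>
             mono_on {x0<..<xf} (poly (pderiv p))
             \<longrightarrow> approx_with c (LINT x:{x0<..<xf}|lborel. exp (- poly p x))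
                   (exp (- poly p x0) * \<bar>xf - x0\<bar>)) \<and>
          (xf < x0 \<and> (\<forall>x\<in>{xf<..<x0}. poly (pderiv p) x < 0) \<and>
             mono_on {xf<..<x0} (poly (pderiv p))
             \<longrightarrow> approx_with c (LINT x:{xf<..<x0}|lborel. exp (- poly p x))
                   (exp (- poly p x0) * \<bar>xf - x0\<bar>))"
  proof (intro exI[of _ "exp (-1)"] conjI allI impI, simp)
    fix p :: "real poly" and x0 xf :: real
    assume V: "filterlim (poly p) at_top at_infinity \<and> poly p x0 < poly p xf \<and> poly p xf < poly p x0 + 1"
    {
      assume H: "x0 < xf \<and> (\<forall>x\<in>{x0<..<xf}. poly (pderiv p) x > 0) \<and> mono_on {x0<..<xf} (poly (pderiv p))"
      then show "approx_with (exp (-1)) (LINT x:{x0<..<xf}|lborel. exp (- poly p x)) (exp (- poly p x0) * \<bar>xf - x0\<bar>)"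
        using core3[of x0 xf p] V by simp
    next
      assume H: "xf < x0 \<and> (\<forall>x\<in>{xf<..<x0}. poly (pderiv p) x < 0) \<and> mono_on {xf<..<x0} (poly (pderiv p))"
      define q where "q = p \<circ>\<^sub>p [:0,-1:]"
      have qv: "\<And>x. poly q x = poly p (-x)" "\<And>x. poly (pderiv q) x = - poly (pderiv p) (-x)"
        unfolding q_def by (rule q_facts)+
      have B1: "-x0 < -xf" using H by simp
      have B2: "\<forall>x\<in>{-x0<..<-xf}. poly (pderiv q) x > 0" using H qv by auto
      have "approx_with (exp (-1)) (LINT x:{-x0<..<-xf}|lborel. exp (- poly q x)) (exp (- poly q (-x0)) * (-xf - -x0))"
        using core3[of "-x0" "-xf" q, OF B1 B2] V qv by simp
      moreover have "(LINT x:{xf<..<x0}|lborel. exp (- poly p x)) = (LINT x:{-x0<..<-xf}|lborel. exp (- poly q x))"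
      proof -
        have "{x. -x \<in> {xf<..<x0}} = {-x0<..<-xf}" by auto
        then show ?thesis by (subst reflect_int) (simp add: qv)
      qed
      ultimately show "approx_with (exp (-1)) (LINT x:{xf<..<x0}|lborel. exp (- poly p x)) (exp (- poly p x0) * \<bar>xf - x0\<bar>)"
        using H by (simp add: qv)
    }
  qed
qed

end
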